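(* Let $\gamma$ be a partition. Then $\gamma$ is $n$-colorless if and only if there exists $k\in\hat I$ such that $v^{(k)}(\gamma)\in\mathbb Z_{\ge0}^n$. Moreover, if $\gamma$ is $n$-colorless, then $v^{(k)}(\gamma)=(\delta_{i,k})_{i\in\hat I}$ for all $k\in\hat I$.
   Context: Fix $n\ge3$ and let $\hat I=\{0,1,\dots,n-1\}$, with residues mod $n$. For a partition $\gamma$ let $Y(\gamma)=\{(x,y)\in\mathbb Z_{\ge1}^2:\gamma_x\ge y\}$. The partition $\gamma$ is $n$-colorless if, for each residue $i$ mod $n$, the number of boxes $(x,y)\in Y(\gamma)$ with $x-y\equiv i\pmod n$ is the same. Corners: let $\gamma'_y=|\{x:\gamma_x\ge y\}|$ be the conjugate partition. - $(x,y)\in\mathbb Z_{\ge1}^2$ is a convex corner of $\gamma$ if $\gamma'_{y+1}<\gamma'_y=x$. - $(x,y)$ is a concave corner if $\gamma'_y=x-1$ and either $y=1$ or $\gamma'_{y-1}>x-1$. For $k,i\in\hat I$ let $CC_i^{(k)}(\gamma)$ (resp. $CV_i^{(k)}(\gamma)$) be the set of concave (resp. convex) corners $(x,y)$ with $k+x-y\equiv i\pmod n$. Define $v^{(k)}(\gamma)\in\mathbb Z^n$ (coordinates indexed by $\hat I$) by $v^{(k)}(\gamma)_i=|CC_i^{(k)}(\gamma)|-|CV_i^{(k)}(\gamma)|$. *)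

theory Defs
  imports Main
begin

text \<open>A partition is a weakly decreasing list of positive naturals; gamma_x is the x-th
part (1-indexed), and 0 for x beyond the length.\<close>

definition is_partition :: "nat list \<Rightarrow> bool" where
  "is_partition \<gamma> \<longleftrightarrow> sorted (rev \<gamma>) \<and> (\<forall>a \<in> set \<gamma>. 0 < a)"

definition part :: "nat list \<Rightarrow> int \<Rightarrow> int" where
  "part \<gamma> x = (if 1 \<le> x \<and> nat x \<le> length \<gamma> then int (\<gamma> ! (nat x - 1)) else 0)"

definition young :: "nat list \<Rightarrow> (int \<times> int) set" where
  "young \<gamma> = {(x, y). 1 \<le> x \<and> 1 \<le> y \<and> part \<gamma> x \<ge> y}"

definition colorless :: "nat \<Rightarrow> nat list \<Rightarrow> bool" where
  "colorless n \<gamma> \<longleftrightarrow> (\<forall>i j. card {(x, y) \<in> young \<gamma>. (x - y) mod int n = i mod int n}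
                            = card {(x, y) \<in> young \<gamma>. (x - y) mod int n = j mod int n})"

definition conj_part :: "nat list \<Rightarrow> int \<Rightarrow> int" where
  "conj_part \<gamma> y = int (card {x::int. 1 \<le> x \<and> part \<gamma> x \<ge> y})"

definition convex_corner :: "nat list \<Rightarrow> int \<Rightarrow> int \<Rightarrow> bool" where
  "convex_corner \<gamma> x y \<longleftrightarrow> 1 \<le> x \<and> 1 \<le> y \<and>
     conj_part \<gamma> (y + 1) < conj_part \<gamma> y \<and> conj_part \<gamma> y = x"

definition concave_corner :: "nat list \<Rightarrow> int \<Rightarrow> int \<Rightarrow> bool" where
  "concave_corner \<gamma> x y \<longleftrightarrow> 1 \<le> x \<and> 1 \<le> y \<and>
     conj_part \<gamma> y = x - 1 \<and> (y = 1 \<or> conj_part \<gamma> (y - 1) > x - 1)"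

definition CC :: "nat \<Rightarrow> nat list \<Rightarrow> int \<Rightarrow> int \<Rightarrow> (int \<times> int) set" where
  "CC n \<gamma> k i = {(x, y). concave_corner \<gamma> x y \<and> (k + x - y) mod int n = i mod int n}"

definition CV :: "nat \<Rightarrow> nat list \<Rightarrow> int \<Rightarrow> int \<Rightarrow> (int \<times> int) set" where
  "CV n \<gamma> k i = {(x, y). convex_corner \<gamma> x y \<and> (k + x - y) mod int n = i mod int n}"

definition vvec :: "nat \<Rightarrow> nat list \<Rightarrow> int \<Rightarrow> int \<Rightarrow> int" where
  "vvec n \<gamma> k i = int (card (CC n \<gamma> k i)) - int (card (CV n \<gamma> k i))"

end

theory Submission
  imports Defs
begin


lemma part_out: "x < 1 \<or> int (length \<gamma>) < x \<Longrightarrow> part \<gamma> x = 0"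
  unfolding part_def by auto

lemma part_nonneg: "0 \<le> part \<gamma> x"
  unfolding part_def by auto

lemma part_pos:
  assumes "is_partition \<gamma>" "1 \<le> x" "x \<le> int (length \<gamma>)"
  shows "1 \<le> part \<gamma> x"
proof -
  have "\<gamma> ! (nat x - 1) \<in> set \<gamma>" using assms(2,3) by auto
  then have "0 < \<gamma> ! (nat x - 1)" using assms(1) unfolding is_partition_def by auto
  then show ?thesis using assms(2,3) unfolding part_def by auto
qed

lemma part_mono:
  assumes "is_partition \<gamma>" "1 \<le> x" "x \<le> x'"
  shows "part \<gamma> x' \<le> part \<gamma> x"
proof (cases "x' \<le> int (length \<gamma>)")
  case True
  have s: "sorted (rev \<gamma>)" using assms(1) unfolding is_partition_def by auto
  have "\<gamma> ! (nat x' - 1) \<le> \<gamma> ! (nat x - 1)"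
    by (rule sorted_rev_nth_mono[OF s]) (use assms True in auto)
  then show ?thesis using assms True unfolding part_def by auto
next
  case False
  then show ?thesis using part_out[of x' \<gamma>] part_nonneg[of \<gamma> x] by auto
qed

lemma down_closed_card:
  fixes S :: "int set"
  assumes "finite S" "\<And>x. x \<in> S \<Longrightarrow> 1 \<le> x"
    "\<And>x x'. x \<in> S \<Longrightarrow> 1 \<le> x' \<Longrightarrow> x' \<le> x \<Longrightarrow> x' \<in> S"
  shows "S = {1..int (card S)}"
proof (cases "S = {}")
  case True then show ?thesis by simp
next
  case False
  define M where "M = Max S"
  have MS: "M \<in> S" using False assms(1) M_def by simp
  have "S = {1..M}"
  proof
    show "S \<subseteq> {1..M}" using assms(1,2) M_def by auto
    show "{1..M} \<subseteq> S" using assms(3)[OF MS] by auto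
  qed
  moreover have "1 \<le> M" using MS assms(2) by auto
  ultimately show ?thesis by simp
qed

lemma conj_iff:
  assumes "is_partition \<gamma>" "1 \<le> y" "1 \<le> x"
  shows "y \<le> part \<gamma> x \<longleftrightarrow> x \<le> conj_part \<gamma> y"
proof -
  define S where "S = {x::int. 1 \<le> x \<and> part \<gamma> x \<ge> y}"
  have c: "conj_part \<gamma> y = int (card S)" unfolding S_def conj_part_def by simp
  have "S \<subseteq> {1..int (length \<gamma>)}"
  proof
    fix z assume "z \<in> S"
    then have "1 \<le> z" "y \<le> part \<gamma> z" unfolding S_def by auto
    then show "z \<in> {1..int (length \<gamma>)}" using part_out[of z \<gamma>] assms(2) by force
  qed
  then have fin: "finite S" by (rule finite_subset) simp
  have "S = {1..int (card S)}"
  proof (rule down_closed_card[OF fin])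
    show "\<And>x. x \<in> S \<Longrightarrow> 1 \<le> x" unfolding S_def by auto
    fix z z' assume "z \<in> S" "1 \<le> z'" "z' \<le> z"
    then show "z' \<in> S" unfolding S_def using part_mono[OF assms(1), of z' z] by auto
  qed
  then have "x \<in> S \<longleftrightarrow> x \<le> conj_part \<gamma> y" using c assms(3) by auto
  then show ?thesis unfolding S_def using assms(3) by auto
qed

lemma conj_nonneg: "0 \<le> conj_part \<gamma> y" unfolding conj_part_def by simp

lemma concave_iff:
  assumes "is_partition \<gamma>"
  shows "concave_corner \<gamma> x y \<longleftrightarrow> 1 \<le> x \<and> 1 \<le> y \<and> part \<gamma> x = y - 1 \<and> (x = 1 \<or> y \<le> part \<gamma> (x - 1))"
proof (cases "1 \<le> x \<and> 1 \<le> y")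
  case False then show ?thesis unfolding concave_corner_def by auto
next
  case True
  then have x: "1 \<le> x" and y: "1 \<le> y" by auto
  have a: "part \<gamma> x < y \<longleftrightarrow> \<not> x \<le> conj_part \<gamma> y" using conj_iff[OF assms y x] by auto
  have b: "x - 1 \<le> conj_part \<gamma> y \<longleftrightarrow> (x = 1 \<or> y \<le> part \<gamma> (x - 1))"
  proof (cases "x = 1")
    case True then show ?thesis using conj_nonneg[of \<gamma> y] by simp
  next
    case False then show ?thesis using conj_iff[OF assms y, of "x - 1"] x by auto
  qed
  have c: "y \<noteq> 1 \<Longrightarrow> (conj_part \<gamma> (y - 1) > x - 1 \<longleftrightarrow> y - 1 \<le> part \<gamma> x)"
    using conj_iff[OF assms _ x, of "y - 1"] y by auto
  show ?thesis unfolding concave_corner_def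
    using a b c x y part_nonneg[of \<gamma> x] by (cases "y = 1") auto
qed

lemma convex_iff:
  assumes "is_partition \<gamma>"
  shows "convex_corner \<gamma> x y \<longleftrightarrow> 1 \<le> x \<and> 1 \<le> y \<and> part \<gamma> x = y \<and> part \<gamma> (x + 1) < y"
proof (cases "1 \<le> x \<and> 1 \<le> y")
  case False then show ?thesis unfolding convex_corner_def by auto
next
  case True
  then have x: "1 \<le> x" and y: "1 \<le> y" by auto
  have a: "y \<le> part \<gamma> x \<longleftrightarrow> x \<le> conj_part \<gamma> y" using conj_iff[OF assms y x] by auto
  have b: "y \<le> part \<gamma> (x+1) \<longleftrightarrow> x + 1 \<le> conj_part \<gamma> y" using conj_iff[OF assms y, of "x+1"] x by auto
  have c: "y + 1 \<le> part \<gamma> x \<longleftrightarrow> x \<le> conj_part \<gamma> (y+1)" using conj_iff[OF assms _ x, of "y+1"] y by auto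
  show ?thesis unfolding convex_corner_def using a b c x y by auto
qed



definition Pr :: "nat list \<Rightarrow> nat \<Rightarrow> int" where "Pr \<gamma> j = part \<gamma> (int j + 1)"

lemma Pr_mono: "is_partition \<gamma> \<Longrightarrow> Pr \<gamma> (Suc j) \<le> Pr \<gamma> j"
  unfolding Pr_def using part_mono[of \<gamma> "int j + 1" "int j + 2"] by (simp add: add.commute)

lemma Pr_nonneg: "0 \<le> Pr \<gamma> j" unfolding Pr_def by (rule part_nonneg)

lemma conc_set:
  assumes "is_partition \<gamma>"
  shows "{(x,y). concave_corner \<gamma> x y} =
     (\<lambda>j. (int j + 1, Pr \<gamma> j + 1)) ` {j. j < Suc (length \<gamma>) \<and> (j = 0 \<or> Pr \<gamma> j < Pr \<gamma> (j - 1))}"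
proof (intro set_eqI iffI)
  fix p assume "p \<in> {(x,y). concave_corner \<gamma> x y}"
  then obtain x y where p: "p = (x,y)" and c: "1 \<le> x" "1 \<le> y" "part \<gamma> x = y - 1" "x = 1 \<or> y \<le> part \<gamma> (x - 1)"
    using concave_iff[OF assms] by auto
  have xN: "x \<le> int (length \<gamma>) + 1"
  proof (rule ccontr)
    assume "\<not> ?thesis"
    then have "part \<gamma> (x - 1) = 0" "x \<noteq> 1" using part_out[of "x-1" \<gamma>] by auto
    then show False using c by auto
  qed
  define j where "j = nat (x - 1)"
  have xj: "x = int j + 1" using c j_def by auto
  have "j < Suc (length \<gamma>)" using xN xj by auto
  moreover have "j = 0 \<or> Pr \<gamma> j < Pr \<gamma> (j - 1)"
  proof (cases "j = 0")
    case False
    then have "int (j - 1) + 1 = x - 1" using xj by auto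
    then show ?thesis using c xj False unfolding Pr_def by auto
  qed simp
  moreover have "p = (int j + 1, Pr \<gamma> j + 1)" using p xj c unfolding Pr_def by auto
  ultimately show "p \<in> (\<lambda>j. (int j + 1, Pr \<gamma> j + 1)) ` {j. j < Suc (length \<gamma>) \<and> (j = 0 \<or> Pr \<gamma> j < Pr \<gamma> (j - 1))}"
    by auto
next
  fix p assume "p \<in> (\<lambda>j. (int j + 1, Pr \<gamma> j + 1)) ` {j. j < Suc (length \<gamma>) \<and> (j = 0 \<or> Pr \<gamma> j < Pr \<gamma> (j - 1))}"
  then obtain j where p: "p = (int j + 1, Pr \<gamma> j + 1)" and j: "j = 0 \<or> Pr \<gamma> j < Pr \<gamma> (j - 1)" by auto
  have "int j + 1 = 1 \<or> Pr \<gamma> j + 1 \<le> part \<gamma> (int j + 1 - 1)"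
  proof (cases "j = 0")
    case False
    then have "int (j - 1) + 1 = int j" by auto
    then show ?thesis using j unfolding Pr_def by auto
  qed simp
  then show "p \<in> {(x,y). concave_corner \<gamma> x y}"
    using p concave_iff[OF assms] Pr_nonneg[of \<gamma> j] unfolding Pr_def by auto
qed

lemma conv_set:
  assumes "is_partition \<gamma>"
  shows "{(x,y). convex_corner \<gamma> x y} =
     (\<lambda>j. (int j + 1, Pr \<gamma> j)) ` {j. j < Suc (length \<gamma>) \<and> Pr \<gamma> (Suc j) < Pr \<gamma> j}"
proof (intro set_eqI iffI)
  fix p assume "p \<in> {(x,y). convex_corner \<gamma> x y}"
  then obtain x y where p: "p = (x,y)" and c: "1 \<le> x" "1 \<le> y" "part \<gamma> x = y" "part \<gamma> (x+1) < y"
    using convex_iff[OF assms] by auto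
  have xN: "x \<le> int (length \<gamma>)" using c part_out[of x \<gamma>] by force
  define j where "j = nat (x - 1)"
  have xj: "x = int j + 1" using c j_def by auto
  have "j < Suc (length \<gamma>)" using xN xj by auto
  moreover have "Pr \<gamma> (Suc j) < Pr \<gamma> j" using c xj unfolding Pr_def by (simp add: add.commute)
  moreover have "p = (int j + 1, Pr \<gamma> j)" using p xj c unfolding Pr_def by auto
  ultimately show "p \<in> (\<lambda>j. (int j + 1, Pr \<gamma> j)) ` {j. j < Suc (length \<gamma>) \<and> Pr \<gamma> (Suc j) < Pr \<gamma> j}"
    by auto
next
  fix p assume "p \<in> (\<lambda>j. (int j + 1, Pr \<gamma> j)) ` {j. j < Suc (length \<gamma>) \<and> Pr \<gamma> (Suc j) < Pr \<gamma> j}"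
  then obtain j where p: "p = (int j + 1, Pr \<gamma> j)" and j: "Pr \<gamma> (Suc j) < Pr \<gamma> j" by auto
  have "1 \<le> Pr \<gamma> j" using j Pr_nonneg[of \<gamma> "Suc j"] by auto
  then show "p \<in> {(x,y). convex_corner \<gamma> x y}"
    using p j convex_iff[OF assms] unfolding Pr_def by (auto simp: add.commute)
qed

lemma young_set:
  "young \<gamma> = (\<lambda>(j,t). (int j + 1, int t + 1)) ` (SIGMA j:{..<length \<gamma>}. {..<nat (Pr \<gamma> j)})"
proof (intro set_eqI iffI)
  fix p assume "p \<in> young \<gamma>"
  then obtain x y where p: "p = (x,y)" and c: "1 \<le> x" "1 \<le> y" "y \<le> part \<gamma> x"
    unfolding young_def by auto
  have xN: "x \<le> int (length \<gamma>)" using c part_out[of x \<gamma>] by force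
  define j where "j = nat (x - 1)"
  define t where "t = nat (y - 1)"
  have "j < length \<gamma>" "t < nat (Pr \<gamma> j)" using xN c unfolding j_def t_def Pr_def by auto
  moreover have "p = (int j + 1, int t + 1)" using p c j_def t_def by auto
  ultimately show "p \<in> (\<lambda>(j,t). (int j + 1, int t + 1)) ` (SIGMA j:{..<length \<gamma>}. {..<nat (Pr \<gamma> j)})"
    by force
next
  fix p assume "p \<in> (\<lambda>(j,t). (int j + 1, int t + 1)) ` (SIGMA j:{..<length \<gamma>}. {..<nat (Pr \<gamma> j)})"
  then obtain j t where "p = (int j + 1, int t + 1)" "t < nat (Pr \<gamma> j)" by auto
  then show "p \<in> young \<gamma>" unfolding young_def Pr_def by auto
qed

lemma sum_young:
  "(\<Sum>p\<in>young \<gamma>. g (fst p - snd p)) = (\<Sum>j<length \<gamma>. \<Sum>t<nat (Pr \<gamma> j). g (int j - int t))"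
proof -
  have inj: "inj_on (\<lambda>(j,t). (int j + 1, int t + 1)) (SIGMA j:{..<length \<gamma>}. {..<nat (Pr \<gamma> j)})"
    by (auto simp: inj_on_def)
  have "(\<Sum>p\<in>young \<gamma>. g (fst p - snd p)) = (\<Sum>(j,t)\<in>(SIGMA j:{..<length \<gamma>}. {..<nat (Pr \<gamma> j)}). g (int j - int t))"
    unfolding young_set by (subst sum.reindex[OF inj]) (simp add: split_def)
  also have "\<dots> = (\<Sum>j<length \<gamma>. \<Sum>t<nat (Pr \<gamma> j). g (int j - int t))"
    by (rule sum.Sigma[symmetric]) auto
  finally show ?thesis .
qed

lemma sum_conc:
  assumes "is_partition \<gamma>"
  shows "(\<Sum>p\<in>{(x,y). concave_corner \<gamma> x y}. g (fst p - snd p)) =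
     (\<Sum>j<Suc (length \<gamma>). if j = 0 \<or> Pr \<gamma> j < Pr \<gamma> (j - 1) then g (int j - Pr \<gamma> j) else 0)"
proof -
  have inj: "inj_on (\<lambda>j. (int j + 1, Pr \<gamma> j + 1)) A" for A by (auto simp: inj_on_def)
  have e: "{j. j < Suc (length \<gamma>) \<and> (j = 0 \<or> Pr \<gamma> j < Pr \<gamma> (j - 1))} = {j \<in> {..<Suc (length \<gamma>)}. (j = 0 \<or> Pr \<gamma> j < Pr \<gamma> (j - 1))}"
    by auto
  have "(\<Sum>p\<in>{(x,y). concave_corner \<gamma> x y}. g (fst p - snd p)) =
     (\<Sum>j\<in>{j \<in> {..<Suc (length \<gamma>)}. (j = 0 \<or> Pr \<gamma> j < Pr \<gamma> (j - 1))}. g (int j - Pr \<gamma> j))"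
    unfolding conc_set[OF assms] e by (subst sum.reindex[OF inj]) simp
  also have "\<dots> = (\<Sum>j<Suc (length \<gamma>). if (j = 0 \<or> Pr \<gamma> j < Pr \<gamma> (j - 1)) then g (int j - Pr \<gamma> j) else 0)"
    by (rule sum.inter_filter) simp
  finally show ?thesis .
qed

lemma sum_conv:
  assumes "is_partition \<gamma>"
  shows "(\<Sum>p\<in>{(x,y). convex_corner \<gamma> x y}. g (fst p - snd p)) =
     (\<Sum>j<Suc (length \<gamma>). if Pr \<gamma> (Suc j) < Pr \<gamma> j then g (int j + 1 - Pr \<gamma> j) else 0)"
proof -
  have inj: "inj_on (\<lambda>j. (int j + 1, Pr \<gamma> j)) A" for A by (auto simp: inj_on_def)
  have e: "{j. j < Suc (length \<gamma>) \<and> Pr \<gamma> (Suc j) < Pr \<gamma> j} = {j \<in> {..<Suc (length \<gamma>)}. Pr \<gamma> (Suc j) < Pr \<gamma> j}"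
    by auto
  have "(\<Sum>p\<in>{(x,y). convex_corner \<gamma> x y}. g (fst p - snd p)) =
     (\<Sum>j\<in>{j \<in> {..<Suc (length \<gamma>)}. Pr \<gamma> (Suc j) < Pr \<gamma> j}. g (int j + 1 - Pr \<gamma> j))"
    unfolding conv_set[OF assms] e by (subst sum.reindex[OF inj]) simp
  also have "\<dots> = (\<Sum>j<Suc (length \<gamma>). if Pr \<gamma> (Suc j) < Pr \<gamma> j then g (int j + 1 - Pr \<gamma> j) else 0)"
    by (rule sum.inter_filter) simp
  finally show ?thesis .
qed

lemma row_identity:
  fixes P :: "nat \<Rightarrow> int" and w :: "int \<Rightarrow> int"
  assumes mono: "\<And>j. P (Suc j) \<le> P j"
  shows "(\<Sum>j<Suc M. if j = 0 \<or> P j < P (j - 1) then w (int j - P j) else 0)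
       - (\<Sum>j<Suc M. if P (Suc j) < P j then w (int j + 1 - P j) else 0)
       = (\<Sum>j<Suc M. w (int j - P j) - w (int j + 1 - P j))
         + (if P (Suc M) = P M then w (int M + 1 - P M) else 0)"
proof (induction M)
  case 0
  then show ?case using mono[of 0] by auto
next
  case (Suc M)
  have m1: "P (Suc M) \<le> P M" and m2: "P (Suc (Suc M)) \<le> P (Suc M)" using mono by auto
  have e1: "(\<Sum>j<Suc (Suc M). F j) = (\<Sum>j<Suc M. F j) + F (Suc M)" for F :: "nat \<Rightarrow> int"
    by (rule sum.lessThan_Suc)
  show ?case
    unfolding e1 using Suc.IH m1 m2
    by (cases "P (Suc (Suc M)) < P (Suc M)"; cases "P (Suc M) < P M")
       (simp_all del: sum.lessThan_Suc add: algebra_simps)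
qed



lemma inner_tele:
  fixes w :: "int \<Rightarrow> int"
  assumes "0 \<le> p"
  shows "(\<Sum>t<nat p. w (int j - int t - 1) + w (int j - int t + 1) - 2 * w (int j - int t))
       = (w (int j + 1) - w (int j)) - (w (int j + 1 - p) - w (int j - p))"
proof -
  define f where "f t = w (int j - int t + 1) - w (int j - int t)" for t :: nat
  have "(\<Sum>t<nat p. w (int j - int t - 1) + w (int j - int t + 1) - 2 * w (int j - int t))
       = (\<Sum>t<nat p. f t - f (Suc t))"
    unfolding f_def by (intro sum.cong) (auto simp: algebra_simps)
  also have "\<dots> = f 0 - f (nat p)" by (rule sum_lessThan_telescope')
  finally show ?thesis unfolding f_def using assms by (simp add: algebra_simps)
qed

lemma corner_identity:
  fixes w :: "int \<Rightarrow> int"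
  assumes pg: "is_partition \<gamma>"
  shows "(\<Sum>p\<in>{(x,y). concave_corner \<gamma> x y}. w (fst p - snd p))
       - (\<Sum>p\<in>{(x,y). convex_corner \<gamma> x y}. w (fst p - snd p))
       = w 0 + (\<Sum>p\<in>young \<gamma>. w (fst p - snd p - 1) + w (fst p - snd p + 1) - 2 * w (fst p - snd p))"
proof -
  define N where "N = length \<gamma>"
  define P where "P = Pr \<gamma>"
  have PN: "P N = 0" "P (Suc N) = 0" unfolding P_def Pr_def N_def using part_out by auto
  have "(\<Sum>p\<in>{(x,y). concave_corner \<gamma> x y}. w (fst p - snd p))
       - (\<Sum>p\<in>{(x,y). convex_corner \<gamma> x y}. w (fst p - snd p))
     = (\<Sum>j<Suc N. w (int j - P j) - w (int j + 1 - P j))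
         + (if P (Suc N) = P N then w (int N + 1 - P N) else 0)"
    unfolding sum_conc[OF pg] sum_conv[OF pg] P_def N_def
    by (rule row_identity) (rule Pr_mono[OF pg])
  also have "\<dots> = (\<Sum>j<N. w (int j - P j) - w (int j + 1 - P j)) + w (int N)"
    using PN by simp
  finally have L: "(\<Sum>p\<in>{(x,y). concave_corner \<gamma> x y}. w (fst p - snd p))
       - (\<Sum>p\<in>{(x,y). convex_corner \<gamma> x y}. w (fst p - snd p))
     = (\<Sum>j<N. w (int j - P j) - w (int j + 1 - P j)) + w (int N)" .
  have "(\<Sum>p\<in>young \<gamma>. w (fst p - snd p - 1) + w (fst p - snd p + 1) - 2 * w (fst p - snd p))
      = (\<Sum>j<N. \<Sum>t<nat (P j). w (int j - int t - 1) + w (int j - int t + 1) - 2 * w (int j - int t))"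
    using sum_young[of "\<lambda>c. w (c - 1) + w (c + 1) - 2 * w c" \<gamma>] unfolding N_def P_def by simp
  also have "\<dots> = (\<Sum>j<N. (w (int j + 1) - w (int j)) - (w (int j + 1 - P j) - w (int j - P j)))"
    by (intro sum.cong refl inner_tele) (simp add: P_def Pr_nonneg)
  also have "\<dots> = (\<Sum>j<N. w (int j + 1) - w (int j)) - (\<Sum>j<N. w (int j + 1 - P j) - w (int j - P j))"
    by (rule sum_subtractf)
  also have "(\<Sum>j<N. w (int j + 1) - w (int j)) = w (int N) - w 0"
    using sum_lessThan_telescope[of "\<lambda>j. w (int j)" N] by (simp add: add.commute)
  finally have R: "(\<Sum>p\<in>young \<gamma>. w (fst p - snd p - 1) + w (fst p - snd p + 1) - 2 * w (fst p - snd p))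
     = w (int N) - w 0 - (\<Sum>j<N. w (int j + 1 - P j) - w (int j - P j))" .
  have "(\<Sum>j<N. w (int j + 1 - P j) - w (int j - P j)) = - (\<Sum>j<N. w (int j - P j) - w (int j + 1 - P j))"
    by (simp add: sum_negf[symmetric])
  then show ?thesis using L R by simp
qed



lemma mod_shift1: "((k + r) mod m - k + d) mod m = (r + d) mod (m::int)"
  by (metis (mono_tags, opaque_lifting) add_diff_cancel_left' diff_minus_eq_add mod_diff_left_eq)

lemma mod_shift2: "((k + (c + d)) mod m = i mod m) = (c mod m = (i - k - d) mod (m::int))"
  by (simp add: mod_eq_dvd_iff algebra_simps)

lemma card_filter_int: "finite A \<Longrightarrow> int (card {p\<in>A. Q p}) = (\<Sum>p\<in>A. if Q p then 1 else 0)"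
  by (simp add: sum.inter_filter[symmetric])

definition Cnt :: "nat \<Rightarrow> nat list \<Rightarrow> int \<Rightarrow> int" where
  "Cnt n \<gamma> r = int (card {(x, y) \<in> young \<gamma>. (x - y) mod int n = r mod int n})"

lemma fin_young: "finite (young \<gamma>)"
  unfolding young_set by auto

lemma fin_conc: "is_partition \<gamma> \<Longrightarrow> finite {(x,y). concave_corner \<gamma> x y}"
  by (simp add: conc_set)

lemma fin_conv: "is_partition \<gamma> \<Longrightarrow> finite {(x,y). convex_corner \<gamma> x y}"
  by (simp add: conv_set)

lemma Cnt_sum: "(\<Sum>p\<in>young \<gamma>. (if (k + (fst p - snd p + d)) mod int n = i mod int n then 1 else 0)) = Cnt n \<gamma> (i - k - d)"
proof -
  have "(\<Sum>p\<in>young \<gamma>. (if (k + (fst p - snd p + d)) mod int n = i mod int n then 1 else 0))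
      = (\<Sum>p\<in>young \<gamma>. (if (fst p - snd p) mod int n = (i - k - d) mod int n then 1 else (0::int)))"
    by (simp only: mod_shift2)
  also have "\<dots> = int (card {p \<in> young \<gamma>. (fst p - snd p) mod int n = (i - k - d) mod int n})"
    by (rule card_filter_int[OF fin_young, symmetric])
  also have "\<dots> = Cnt n \<gamma> (i - k - d)" unfolding Cnt_def by (simp add: split_def)
  finally show ?thesis .
qed

lemma vvec_formula:
  assumes pg: "is_partition \<gamma>"
  shows "vvec n \<gamma> k i = (if k mod int n = i mod int n then 1 else 0)
          + Cnt n \<gamma> (i - k + 1) + Cnt n \<gamma> (i - k - 1) - 2 * Cnt n \<gamma> (i - k)"
proof -
  define w where "w c = (if (k + c) mod int n = i mod int n then 1 else (0::int))" for c
  have cc: "int (card (CC n \<gamma> k i)) = (\<Sum>p\<in>{(x,y). concave_corner \<gamma> x y}. w (fst p - snd p))"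
  proof -
    have "CC n \<gamma> k i = {p \<in> {(x,y). concave_corner \<gamma> x y}. (k + (fst p - snd p)) mod int n = i mod int n}"
      unfolding CC_def by (auto simp: add_diff_eq)
    then show ?thesis using card_filter_int[OF fin_conc[OF pg]] unfolding w_def by simp
  qed
  have cv: "int (card (CV n \<gamma> k i)) = (\<Sum>p\<in>{(x,y). convex_corner \<gamma> x y}. w (fst p - snd p))"
  proof -
    have "CV n \<gamma> k i = {p \<in> {(x,y). convex_corner \<gamma> x y}. (k + (fst p - snd p)) mod int n = i mod int n}"
      unfolding CV_def by (auto simp: add_diff_eq)
    then show ?thesis using card_filter_int[OF fin_conv[OF pg]] unfolding w_def by simp
  qed
  have "vvec n \<gamma> k i = w 0 + (\<Sum>p\<in>young \<gamma>. w (fst p - snd p - 1) + w (fst p - snd p + 1) - 2 * w (fst p - snd p))"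
    unfolding vvec_def cc cv by (rule corner_identity[OF pg])
  also have "\<dots> = w 0 + (\<Sum>p\<in>young \<gamma>. w (fst p - snd p + (-1))) + (\<Sum>p\<in>young \<gamma>. w (fst p - snd p + 1))
        - 2 * (\<Sum>p\<in>young \<gamma>. w (fst p - snd p + 0))"
    by (simp add: sum.distrib sum_subtractf sum_distrib_left)
  also have "\<dots> = (if k mod int n = i mod int n then 1 else 0)
          + Cnt n \<gamma> (i - k + 1) + Cnt n \<gamma> (i - k - 1) - 2 * Cnt n \<gamma> (i - k)"
    unfolding w_def Cnt_sum by simp
  finally show ?thesis .
qed

lemma T_sum:
  fixes f :: "int \<Rightarrow> int"
  shows "(\<Sum>r<Suc m. int r * (f (int r + 1) + f (int r - 1) - 2 * f (int r)))
     = int (Suc m) * (f (int m + 1) - f (int m)) - (f (int m + 1) - f 0)"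
proof (induction m)
  case 0 then show ?case by simp
next
  case (Suc m)
  have e1: "(\<Sum>j<Suc (Suc m). F j) = (\<Sum>j<Suc m. F j) + F (Suc m)" for F :: "nat \<Rightarrow> int"
    by (rule sum.lessThan_Suc)
  show ?case unfolding e1 Suc.IH by (simp add: algebra_simps)
qed

lemma alg:
  fixes C :: "int \<Rightarrow> int" and n :: nat
  assumes n: "n \<ge> 1" and per: "\<And>a b. a mod int n = b mod int n \<Longrightarrow> C a = C b"
    and u: "\<And>r. 0 \<le> r \<Longrightarrow> r < int n \<Longrightarrow> 0 \<le> (if r = 0 then 1 else 0) + C (r+1) + C (r-1) - 2 * C r"
  shows "C r = C 0"
proof -
  define u where "u j = (if j = 0 then 1 else 0) + C (int j + 1) + C (int j - 1) - 2 * C (int j)" for j :: nat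
  have unn: "j < n \<Longrightarrow> 0 \<le> u j" for j using u[of "int j"] unfolding u_def by auto
  have Cn: "C (int n) = C 0" by (rule per) simp
  have Cm1: "C (int n - 1) = C (-1)" by (rule per) (simp add: mod_eq_dvd_iff)
  have S1: "(\<Sum>j<n. u j) = 1"
  proof -
    have "(\<Sum>j<n. u j) = (\<Sum>j<n. (if j = 0 then 1 else 0) + (C (int (Suc j)) - C (int j)) - (C (int (Suc j) - 1) - C (int j - 1)))"
      unfolding u_def by (intro sum.cong) (auto simp: algebra_simps)
    also have "\<dots> = (\<Sum>j<n. (if j = 0 then 1 else 0)) + (\<Sum>j<n. C (int (Suc j)) - C (int j)) - (\<Sum>j<n. C (int (Suc j) - 1) - C (int j - 1))"
      by (simp only: sum.distrib sum_subtractf)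
    also have "\<dots> = 1 + (C (int n) - C 0) - (C (int n - 1) - C (-1))"
      using n by (simp only: sum_lessThan_telescope[of "\<lambda>j. C (int j)"] sum_lessThan_telescope[of "\<lambda>j. C (int j - 1)"]) simp
    finally show ?thesis using Cn Cm1 by simp
  qed
  obtain m where m: "n = Suc m" using n by (cases n) auto
  have S2: "(\<Sum>j<n. int j * u j) = int n * (C 0 - C (int n - 1))"
  proof -
    have "(\<Sum>j<n. int j * u j) = (\<Sum>r<Suc m. int r * (C (int r + 1) + C (int r - 1) - 2 * C (int r)))"
      unfolding m u_def by (intro sum.cong) (auto simp: algebra_simps)
    also have "\<dots> = int (Suc m) * (C (int m + 1) - C (int m)) - (C (int m + 1) - C 0)" by (rule T_sum)
    finally show ?thesis using Cn m by (simp add: algebra_simps)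
  qed
  define s where "s = (\<Sum>j<n. int j * u j)"
  have s0: "0 \<le> s" unfolding s_def by (intro sum_nonneg) (simp add: unn)
  have "s \<le> (\<Sum>j<n. (int n - 1) * u j)" unfolding s_def
    by (intro sum_mono mult_right_mono) (auto simp: unn)
  also have "\<dots> = int n - 1" using S1 by (simp add: sum_distrib_left[symmetric])
  finally have s1: "s \<le> int n - 1" .
  have sz: "s = 0"
  proof -
    define q where "q = C 0 - C (int n - 1)"
    have sq: "s = int n * q" using S2 unfolding s_def q_def by simp
    consider "q = 0" | "q \<ge> 1" | "q \<le> -1" by linarith
    then show ?thesis
    proof cases
      case 1 then show ?thesis using sq by simp
    next
      case 2
      then have "int n * 1 \<le> int n * q" by (intro mult_left_mono) auto
      then show ?thesis using sq s1 by simp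
    next
      case 3
      then have "int n * q \<le> int n * (-1)" by (intro mult_left_mono) auto
      then show ?thesis using sq s0 n by simp
    qed
  qed
  have uz: "1 \<le> j \<Longrightarrow> j < n \<Longrightarrow> u j = 0" for j
  proof -
    assume j: "1 \<le> j" "j < n"
    have "\<forall>j\<in>{..<n}. int j * u j = 0"
      using sz unfolding s_def by (subst sum_nonneg_eq_0_iff[symmetric]) (auto simp: unn)
    then have "int j * u j = 0" using j(2) by blast
    then show "u j = 0" using j(1) by simp
  qed
  define d where "d = C 1 - C 0"
  have lin: "j + 1 \<le> n \<longrightarrow> C (int j) = C 0 + int j * d \<and> C (int j + 1) = C 0 + (int j + 1) * d" for j
  proof (induction j)
    case 0 then show ?case unfolding d_def by simp
  next
    case (Suc j)
    show ?case
    proof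
      assume a: "Suc j + 1 \<le> n"
      then have IH: "C (int j) = C 0 + int j * d" "C (int j + 1) = C 0 + (int j + 1) * d" using Suc by auto
      have "u (Suc j) = 0" using a by (intro uz) auto
      then have "C (int j + 2) + C (int j) - 2 * C (int j + 1) = 0" unfolding u_def by (simp add: algebra_simps)
      then show "C (int (Suc j)) = C 0 + int (Suc j) * d \<and> C (int (Suc j) + 1) = C 0 + (int (Suc j) + 1) * d"
        using IH by (simp add: algebra_simps)
    qed
  qed
  have "m + 1 \<le> n" using m by simp
  then have "C (int m + 1) = C 0 + (int m + 1) * d" using lin[of m] by blast
  moreover have "int n = int m + 1" using m by simp
  ultimately have "C (int n) = C 0 + int n * d" by simp
  then have "int n * d = 0" using Cn by simp
  then have d0: "d = 0" using n by simp
  have all: "j < n \<Longrightarrow> C (int j) = C 0" for j using lin[of j] d0 by auto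
  have "C r = C (r mod int n)" by (rule per) simp
  also have "r mod int n = int (nat (r mod int n))" using n by simp
  also have "C (int (nat (r mod int n))) = C 0" using n by (intro all) (simp add: nat_less_iff)
  finally show ?thesis .
qed

theorem mainTheorem10:
  fixes n :: nat and \<gamma> :: "nat list"
  assumes "n \<ge> 3" and "is_partition \<gamma>"
  shows "(colorless n \<gamma> \<longleftrightarrow>
           (\<exists>k\<in>{0..<int n}. \<forall>i\<in>{0..<int n}. vvec n \<gamma> k i \<ge> 0))
       \<and> (colorless n \<gamma> \<longrightarrow>
           (\<forall>k\<in>{0..<int n}. \<forall>i\<in>{0..<int n}. vvec n \<gamma> k i = (if i = k then 1 else 0)))"
proof -
  have per: "\<And>a b. a mod int n = b mod int n \<Longrightarrow> Cnt n \<gamma> a = Cnt n \<gamma> b"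
    unfolding Cnt_def by simp
  have col: "colorless n \<gamma> \<longleftrightarrow> (\<forall>r. Cnt n \<gamma> r = Cnt n \<gamma> 0)"
  proof
    assume c: "colorless n \<gamma>"
    show "\<forall>r. Cnt n \<gamma> r = Cnt n \<gamma> 0"
    proof
      fix r :: int
      show "Cnt n \<gamma> r = Cnt n \<gamma> 0" using c unfolding colorless_def Cnt_def by (rule_tac arg_cong[where f=int]) blast
    qed
  next
    assume h: "\<forall>r. Cnt n \<gamma> r = Cnt n \<gamma> 0"
    show "colorless n \<gamma>" unfolding colorless_def
    proof (intro allI)
      fix i j :: int
      have "Cnt n \<gamma> i = Cnt n \<gamma> 0" "Cnt n \<gamma> j = Cnt n \<gamma> 0" using h by blast+
      then have "Cnt n \<gamma> i = Cnt n \<gamma> j" by simp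
      then show "card {(x, y) \<in> young \<gamma>. (x - y) mod int n = i mod int n}
               = card {(x, y) \<in> young \<gamma>. (x - y) mod int n = j mod int n}" unfolding Cnt_def by simp
    qed
  qed
  have part2: "colorless n \<gamma> \<Longrightarrow> k \<in> {0..<int n} \<Longrightarrow> i \<in> {0..<int n} \<Longrightarrow> vvec n \<gamma> k i = (if i = k then 1 else 0)" for k i
  proof -
    assume c: "colorless n \<gamma>" and k: "k \<in> {0..<int n}" and i: "i \<in> {0..<int n}"
    have "k mod int n = k" "i mod int n = i" using k i by auto
    moreover have h: "\<forall>r. Cnt n \<gamma> r = Cnt n \<gamma> 0" using c col by blast
    then have "Cnt n \<gamma> (i - k + 1) = Cnt n \<gamma> 0" "Cnt n \<gamma> (i - k - 1) = Cnt n \<gamma> 0" "Cnt n \<gamma> (i - k) = Cnt n \<gamma> 0"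
      by blast+
    ultimately show ?thesis unfolding vvec_formula[OF assms(2)] by auto
  qed
  have backw: "colorless n \<gamma>" if kk: "k \<in> {0..<int n}" and hh: "\<forall>i\<in>{0..<int n}. 0 \<le> vvec n \<gamma> k i" for k
  proof -
    have "Cnt n \<gamma> r = Cnt n \<gamma> 0" for r
    proof (rule alg[of n "Cnt n \<gamma>"])
      show "1 \<le> n" using assms(1) by simp
      show "\<And>a b. a mod int n = b mod int n \<Longrightarrow> Cnt n \<gamma> a = Cnt n \<gamma> b" by (rule per)
      fix r :: int assume r: "0 \<le> r" "r < int n"
      define i where "i = (k + r) mod int n"
      have iin: "i \<in> {0..<int n}" unfolding i_def using r by auto
      have e1: "(k mod int n = i mod int n) \<longleftrightarrow> r = 0"
      proof -
        have "(k mod int n = i mod int n) \<longleftrightarrow> k mod int n = (k + r) mod int n" unfolding i_def by simp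
        also have "\<dots> \<longleftrightarrow> int n dvd r" by (simp add: mod_eq_dvd_iff dvd_diff_commute)
        also have "\<dots> \<longleftrightarrow> r = 0" using r zdvd_not_zless[of r "int n"] by fastforce
        finally show ?thesis .
      qed
      have "Cnt n \<gamma> (i - k + d) = Cnt n \<gamma> (r + d)" for d
        by (rule per) (simp add: i_def mod_shift1)
      from this[of 1] this[of "-1"] this[of 0] have
        "Cnt n \<gamma> (i - k + 1) = Cnt n \<gamma> (r + 1)" "Cnt n \<gamma> (i - k - 1) = Cnt n \<gamma> (r - 1)"
        "Cnt n \<gamma> (i - k) = Cnt n \<gamma> r" by simp_all
      note c1 = this(1) and c2 = this(2) and c3 = this(3)
      show "0 \<le> (if r = 0 then 1 else 0) + Cnt n \<gamma> (r+1) + Cnt n \<gamma> (r-1) - 2 * Cnt n \<gamma> r"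
      proof -
        have v: "0 \<le> vvec n \<gamma> k i" using hh iin by blast
        show ?thesis using v unfolding vvec_formula[OF assms(2)] e1 c1 c2 c3 by simp
      qed
    qed
    then show ?thesis using col by auto
  qed
  show ?thesis
  proof (intro conjI impI)
    show "colorless n \<gamma> \<longleftrightarrow> (\<exists>k\<in>{0..<int n}. \<forall>i\<in>{0..<int n}. vvec n \<gamma> k i \<ge> 0)"
    proof
      assume c: "colorless n \<gamma>"
      have "0 \<in> {0..<int n}" using assms(1) by simp
      then show "\<exists>k\<in>{0..<int n}. \<forall>i\<in>{0..<int n}. vvec n \<gamma> k i \<ge> 0"
        using part2[OF c] by force
    next
      assume "\<exists>k\<in>{0..<int n}. \<forall>i\<in>{0..<int n}. vvec n \<gamma> k i \<ge> 0"
      then show "colorless n \<gamma>" using backw by blast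
    qed
    show "colorless n \<gamma> \<Longrightarrow> \<forall>k\<in>{0..<int n}. \<forall>i\<in>{0..<int n}. vvec n \<gamma> k i = (if i = k then 1 else 0)"
      using part2 by blast
  qed
qed

end
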